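(* Let $L\subseteq\mathbb{R}^n$ be a cocompact lattice and $O\subseteq\mathbb{R}^n$ a nonempty open subset such that $v_1+v_2\in O$ for all $v_1,v_2\in O$. Then $O\cap L\neq\emptyset$. *)

theory Defs
  imports "HOL-Analysis.Analysis"
begin

definition additive_subgroup :: "'a::ab_group_add set \<Rightarrow> bool" where
  "additive_subgroup L \<longleftrightarrow>
     0 \<in> L \<and> (\<forall>x\<in>L. \<forall>y\<in>L. x + y \<in> L) \<and> (\<forall>x\<in>L. - x \<in> L)"

text \<open>A cocompact lattice in R^n: a discrete additive subgroup L such that the
  quotient R^n / L is compact, i.e. some compact set K satisfies K + L = R^n.\<close>
definition cocompact_lattice :: "(real ^ 'n) set \<Rightarrow> bool" where
  "cocompact_lattice L \<longleftrightarrow>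
     additive_subgroup L \<and> discrete L \<and>
     (\<exists>K. compact K \<and> {k + l | k l. k \<in> K \<and> l \<in> L} = UNIV)"

end

theory Submission
  imports Defs
begin

lemma mult_in_U:
  fixes U :: "(real ^ 'n) set"
  assumes "\<And>v1 v2. v1 \<in> U \<Longrightarrow> v2 \<in> U \<Longrightarrow> v1 + v2 \<in> U" and "x \<in> U"
  shows "real (Suc m) *\<^sub>R x \<in> U"
proof (induction m)
  case 0 then show ?case using assms(2) by simp
next
  case (Suc m)
  have "real (Suc (Suc m)) *\<^sub>R x = real (Suc m) *\<^sub>R x + x"
    using scaleR_add_left[of "real (Suc m)" 1 x] by simp
  then show ?case using assms Suc by simp
qed

theorem mainTheorem13:
  fixes L U :: "(real ^ 'n) set"
  assumes "cocompact_lattice L"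
    and "open U" and "U \<noteq> {}"
    and "\<And>v1 v2. v1 \<in> U \<Longrightarrow> v2 \<in> U \<Longrightarrow> v1 + v2 \<in> U"
  shows "U \<inter> L \<noteq> {}"
proof -
  obtain K where K: "compact K" and KL: "{k + l | k l. k \<in> K \<and> l \<in> L} = UNIV"
    using assms(1) unfolding cocompact_lattice_def by blast
  obtain R where R: "\<And>k. k \<in> K \<Longrightarrow> norm k \<le> R"
    using compact_imp_bounded[OF K] bounded_iff by blast
  obtain u where u: "u \<in> U" using assms(3) by blast
  obtain r where r: "r > 0" "ball u r \<subseteq> U" using assms(2) u open_contains_ball by blast
  obtain m :: nat where m: "real m * r > R"
    using reals_Archimedean3[OF r(1)] by blast
  define M where "M = real (Suc m)"
  have Mpos: "M > 0" and MR: "M * r > R"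
    using m r(1) unfolding M_def by (auto simp: algebra_simps)
  have ballU: "y \<in> U" if "dist y (M *\<^sub>R u) < M * r" for y
  proof -
    have "dist ((1/M) *\<^sub>R y) u < r"
    proof -
      have "(1/M) *\<^sub>R y - u = (1/M) *\<^sub>R (y - M *\<^sub>R u)" using Mpos by (simp add: algebra_simps)
      hence "dist ((1/M) *\<^sub>R y) u = norm (y - M *\<^sub>R u) / M"
        using Mpos by (simp add: dist_norm)
      also have "\<dots> < r" using that Mpos by (simp add: dist_norm field_simps)
      finally show ?thesis .
    qed
    hence "(1/M) *\<^sub>R y \<in> U" using r(2) by (auto simp: dist_commute)
    from mult_in_U[OF assms(4) this, of m] have "M *\<^sub>R ((1/M) *\<^sub>R y) \<in> U"
      unfolding M_def .
    thus ?thesis using Mpos by simp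
  qed
  have "M *\<^sub>R u \<in> {k + l | k l. k \<in> K \<and> l \<in> L}" using KL by simp
  then obtain k l where kl: "k \<in> K" "l \<in> L" "M *\<^sub>R u = k + l" by blast
  have "dist l (M *\<^sub>R u) = norm k" using kl(3) by (simp add: dist_norm norm_minus_commute)
  also have "\<dots> < M * r" using R[OF kl(1)] MR by linarith
  finally have "l \<in> U" by (rule ballU)
  thus ?thesis using kl(2) by blast
qed

end
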